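(* Let $R$ be an abelian Rickart $*$-ring and $a,b\in R$ with $a\perp b$. Then, in the natural partial order, $a\wedge b=0$ and $a\vee b=a+b$.
   Context: A Rickart $*$-ring is a $*$-ring in which the right annihilator of every element is generated, as a right ideal, by a projection ($e=e^2=e^*$); it has unity. Abelian: all idempotents central. Natural partial order: $a\leq b$ iff there is $x\in R$ with $a=xa=xb=ax^*=bx^*$. Orthogonality: $a\perp b$ iff there is $x\in R$ with $xa=a=ax^*$ and $xb=0=bx^*$. *)

theory Defs
  imports Main
begin

definition star_ring :: "('a::ring_1 \<Rightarrow> 'a) \<Rightarrow> bool" where
  "star_ring st \<longleftrightarrow>
     (\<forall>x y. st (x + y) = st x + st y) \<and>
     (\<forall>x y. st (x * y) = st y * st x) \<and>
     (\<forall>x. st (st x) = x)"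

definition projection :: "('a::ring_1 \<Rightarrow> 'a) \<Rightarrow> 'a \<Rightarrow> bool" where
  "projection st e \<longleftrightarrow> e * e = e \<and> st e = e"

definition rickart_star_ring :: "('a::ring_1 \<Rightarrow> 'a) \<Rightarrow> bool" where
  "rickart_star_ring st \<longleftrightarrow> star_ring st \<and>
     (\<forall>x. \<exists>e. projection st e \<and> {y. x * y = 0} = {e * r | r. True})"

definition abelian_ring :: "'a::ring_1 itself \<Rightarrow> bool" where
  "abelian_ring _ \<longleftrightarrow> (\<forall>e::'a. e * e = e \<longrightarrow> (\<forall>r. e * r = r * e))"

definition npo :: "('a::ring_1 \<Rightarrow> 'a) \<Rightarrow> 'a \<Rightarrow> 'a \<Rightarrow> bool" where
  "npo st a b \<longleftrightarrow> (\<exists>x. a = x * a \<and> x * a = x * b \<and> x * b = a * st x \<and> a * st x = b * st x)"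

definition orth :: "('a::ring_1 \<Rightarrow> 'a) \<Rightarrow> 'a \<Rightarrow> 'a \<Rightarrow> bool" where
  "orth st a b \<longleftrightarrow> (\<exists>x. x * a = a \<and> a = a * st x \<and> x * b = 0 \<and> b * st x = 0)"

definition is_meet :: "('a \<Rightarrow> 'a \<Rightarrow> bool) \<Rightarrow> 'a \<Rightarrow> 'a \<Rightarrow> 'a \<Rightarrow> bool" where
  "is_meet le a b m \<longleftrightarrow> le m a \<and> le m b \<and> (\<forall>c. le c a \<and> le c b \<longrightarrow> le c m)"

definition is_join :: "('a \<Rightarrow> 'a \<Rightarrow> bool) \<Rightarrow> 'a \<Rightarrow> 'a \<Rightarrow> 'a \<Rightarrow> bool" where
  "is_join le a b j \<longleftrightarrow> le a j \<and> le b j \<and> (\<forall>c. le a c \<and> le b c \<longrightarrow> le j c)"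

end

theory Submission
  imports Defs
begin

theorem mainTheorem9:
  fixes st :: "'a::ring_1 \<Rightarrow> 'a" and a b :: 'a
  assumes "rickart_star_ring st"
    and "abelian_ring TYPE('a)"
    and "orth st a b"
  shows "is_meet (npo st) a b 0 \<and> is_join (npo st) a b (a + b)"
proof -
  have sr: "star_ring st" using assms(1) unfolding rickart_star_ring_def by blast
  have add: "\<And>u v. st (u + v) = st u + st v" using sr unfolding star_ring_def by blast
  have mul: "\<And>u v. st (u * v) = st v * st u" using sr unfolding star_ring_def by blast
  have inv: "\<And>u. st (st u) = u" using sr unfolding star_ring_def by blast
  have s0: "st 0 = 0" using add[of 0 0] by simp
  have sneg: "\<And>u. st (- u) = - st u"
    using add s0 by (metis add.right_inverse add_eq_0_iff)
  have sdiff: "\<And>u v. st (u - v) = st u - st v"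
    using add sneg by (metis diff_conv_add_uminus)
  have s1: "st 1 = 1"
  proof -
    have "st 1 = st 1 * st (st 1)" using inv by simp
    also have "\<dots> = st (st 1 * 1)" by (simp only: mul[of "st 1" 1])
    also have "\<dots> = 1" using inv by simp
    finally show ?thesis .
  qed
  have cen: "\<And>(e::'a) r. e * e = e \<Longrightarrow> e * r = r * e"
    using assms(2) unfolding abelian_ring_def by blast
  obtain x where x: "x * a = a" "a = a * st x" "x * b = 0" "b * st x = 0"
    using assms(3) unfolding orth_def by blast
  obtain p where pp: "projection st p" and ann: "{y. x * y = 0} = {p * r | r. True}"
    using assms(1) unfolding rickart_star_ring_def by blast
  have pid: "p * p = p" and ps: "st p = p" using pp unfolding projection_def by auto
  have pc: "\<And>r. p * r = r * p" using cen pid by blast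
  have "p \<in> {p * r | r. True}" by (intro CollectI exI[of _ 1]) simp
  hence xp: "x * p = 0" using ann by blast
  have "b \<in> {p * r | r. True}" using ann x(3) by blast
  then obtain r where "b = p * r" by blast
  hence pb: "p * b = b" by (simp add: mult.assoc[symmetric] pid)
  have pa: "p * a = 0"
  proof -
    have "p * a = p * (x * a)" using x by simp
    also have "\<dots> = (x * p) * a" by (simp add: mult.assoc[symmetric] pc)
    finally show ?thesis using xp by simp
  qed
  have ap: "a * p = 0" using pa pc by simp
  have bp: "b * p = b" using pb pc by simp
  have meet: "is_meet (npo st) a b 0"
    unfolding is_meet_def
  proof (intro conjI allI impI)
    show "npo st 0 a" unfolding npo_def by (rule exI[of _ 0]) (simp add: s0)
    show "npo st 0 b" unfolding npo_def by (rule exI[of _ 0]) (simp add: s0)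
  next
    fix c assume "npo st c a \<and> npo st c b"
    then obtain y z where y: "c = y * c" "y * c = y * a" "y * a = c * st y" "c * st y = a * st y"
      and z: "c = z * c" "z * c = z * b" "z * b = c * st z" "c * st z = b * st z"
      unfolding npo_def by blast
    have "c = a * st y" using y by simp
    hence "x * c = c" using x(1) by (simp add: mult.assoc[symmetric])
    moreover have "c = b * st z" using z by simp
    hence "x * c = 0" using x(3) by (simp add: mult.assoc[symmetric])
    ultimately have "c = 0" by simp
    thus "npo st c 0" unfolding npo_def by (intro exI[of _ 0]) (simp add: s0)
  qed
  have j1: "npo st a (a + b)" unfolding npo_def
    by (rule exI[of _ x]) (use x in \<open>simp add: distrib_left distrib_right\<close>)
  have j2: "npo st b (a + b)" unfolding npo_def
  proof (rule exI[of _ "1 - x"])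
    have "a * st x = a" using x by simp
    then show "b = (1 - x) * b \<and> (1 - x) * b = (1 - x) * (a + b) \<and>
      (1 - x) * (a + b) = b * st (1 - x) \<and> b * st (1 - x) = (a + b) * st (1 - x)"
      using x by (simp add: sdiff s1 algebra_simps)
  qed
  have j3: "npo st (a + b) c" if ac: "npo st a c" and bc: "npo st b c" for c
  proof -
    obtain y where y: "a = y * a" "y * a = y * c" "y * c = a * st y" "a * st y = c * st y"
      using ac unfolding npo_def by blast
    obtain z where z: "b = z * b" "z * b = z * c" "z * c = b * st z" "b * st z = c * st z"
      using bc unfolding npo_def by blast
    define w where "w = (1 - p) * y + p * z"
    have sw: "st w = st y * (1 - p) + st z * p"
      unfolding w_def using add mul sdiff s1 ps by simp
    have e1: "(1 - p) * y * a = a" using y pa by (simp add: algebra_simps)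
    have e2: "(1 - p) * y * b = 0"
    proof -
      have "(1 - p) * y * b = (1 - p) * y * (p * b)" using pb by simp
      also have "\<dots> = (1 - p) * p * (y * b)" by (metis mult.assoc pc)
      finally show ?thesis using pid by (simp add: algebra_simps)
    qed
    have e3: "p * z * a = 0" by (metis mult.assoc pc pa mult_zero_right)
    have e4: "p * z * b = b" using z pb by (metis mult.assoc)
    have f1: "a * st y * (1 - p) = a" using y ap by (simp add: algebra_simps)
    have f2: "b * st y * (1 - p) = 0"
    proof -
      have "b * st y * (1 - p) = b * p * st y * (1 - p)" using bp by simp
      also have "\<dots> = b * st y * (p * (1 - p))" by (metis mult.assoc pc)
      finally show ?thesis using pid by (simp add: algebra_simps)
    qed
    have f3: "a * st z * p = 0" by (metis mult.assoc pc ap mult_zero_left)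
    have f4: "b * st z * p = b" using z bp by (metis mult.assoc)
    have g1: "w * (a + b) = a + b" unfolding w_def
      using e1 e2 e3 e4 by (simp add: algebra_simps)
    have g2: "w * c = a + b" unfolding w_def
      using y z pa pb by (simp add: algebra_simps)
    have g3: "(a + b) * st w = a + b" unfolding sw
      using f1 f2 f3 f4 by (simp add: algebra_simps)
    have g4: "c * st w = a + b" unfolding sw
      using y z ap bp by (simp add: algebra_simps)
    show ?thesis unfolding npo_def
      by (rule exI[of _ w]) (use g1 g2 g3 g4 in simp)
  qed
  show ?thesis using meet j1 j2 j3 unfolding is_join_def by blast
qed

end
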